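(* Let $\alpha\in(0,1]$ be rational, $\lambda\in\mathbb N$, $P$ a profile, and $N'\subseteq N$ a group that is $(\alpha,\lambda)$-significant in $P$. Let $r$ be any ranking that Reverse SeqPAV may output on $P$ (under any tie-breaking). Then there exists a real number $y\ge\lambda$ such that $\mathrm{avg}(N',r_{\le k})\ge y$ for $k=\min(m,\lfloor y/\alpha\rfloor)$.
   Context: Let $N=[n]$ be a finite set of voters and $A$ a finite set of $m$ alternatives; a profile $P=(A_1,\dots,A_n)$ gives each voter $i$ a non-empty approval set $A_i\subseteq A$. A ranking $r=(r_1,\dots,r_m)$ is a linear order of $A$ and $r_{\le k}=\{r_1,\dots,r_k\}$. For nonempty $N'\subseteq N$ and $S\subseteq A$, $\mathrm{avg}(N',S)=\frac1{|N'|}\sum_{i\in N'}|A_i\cap S|$. The cohesiveness of $N'$ is $\lambda(N')=|\bigcap_{i\in N'}A_i|$; $N'$ is $(\alpha,\lambda)$-significant in $P$ if $|N'|=\lceil\alpha n\rceil$ and $\lambda(N')\ge\lambda$. For $S\subseteq A$, $w_{\mathrm{PAV}}(S)=\sum_{i\in N}\sum_{j=1}^{|A_i\cap S|}\frac1j$. Reverse SeqPAV builds a ranking from the bottom: it starts with $S=A$ and the empty ranking, and at each step picks $a\in S$ minimizing $w_{\mathrm{PAV}}(S)-w_{\mathrm{PAV}}(S\setminus\{a\})$ (ties broken arbitrarily), removes $a$ from $S$ and prepends it to the ranking, until $S$ is empty. *)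

theory Defs
  imports Complex_Main
begin

definition is_profile :: "'v set \<Rightarrow> 'b set \<Rightarrow> ('v \<Rightarrow> 'b set) \<Rightarrow> bool" where
  "is_profile N A Ap \<longleftrightarrow> finite N \<and> finite A \<and> (\<forall>i\<in>N. Ap i \<noteq> {} \<and> Ap i \<subseteq> A)"

definition avg :: "('v \<Rightarrow> 'b set) \<Rightarrow> 'v set \<Rightarrow> 'b set \<Rightarrow> real" where
  "avg Ap N' S = (\<Sum>i\<in>N'. real (card (Ap i \<inter> S))) / real (card N')"

definition cohesiveness :: "('v \<Rightarrow> 'b set) \<Rightarrow> 'v set \<Rightarrow> nat" where
  "cohesiveness Ap N' = card (\<Inter>i\<in>N'. Ap i)"

definition significant :: "'v set \<Rightarrow> ('v \<Rightarrow> 'b set) \<Rightarrow> real \<Rightarrow> nat \<Rightarrow> 'v set \<Rightarrow> bool" where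
  "significant N Ap \<alpha> l N' \<longleftrightarrow> N' \<subseteq> N \<and> card N' = nat \<lceil>\<alpha> * real (card N)\<rceil>
      \<and> cohesiveness Ap N' \<ge> l"

definition w_pav :: "'v set \<Rightarrow> ('v \<Rightarrow> 'b set) \<Rightarrow> 'b set \<Rightarrow> real" where
  "w_pav N Ap S = (\<Sum>i\<in>N. \<Sum>j=1..card (Ap i \<inter> S). 1 / real j)"

text \<open>Reverse SeqPAV: rev_seqpav N Ap S r holds iff, starting from the remaining set S,
  the algorithm (under some tie-breaking) can place the elements of S in the order r
  (r being the top part of the final ranking, built from the bottom by prepending).\<close>
inductive rev_seqpav :: "'v set \<Rightarrow> ('v \<Rightarrow> 'b set) \<Rightarrow> 'b set \<Rightarrow> 'b list \<Rightarrow> bool"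
  for N :: "'v set" and Ap :: "'v \<Rightarrow> 'b set" where
  empty: "rev_seqpav N Ap {} []"
| step: "\<lbrakk> a \<in> S;
          \<forall>b\<in>S. w_pav N Ap S - w_pav N Ap (S - {a}) \<le> w_pav N Ap S - w_pav N Ap (S - {b});
          rev_seqpav N Ap (S - {a}) r \<rbrakk>
         \<Longrightarrow> rev_seqpav N Ap S (r @ [a])"

end

theory Submission
  imports Defs
begin

lemma rev_props:
  assumes "rev_seqpav N Ap S r"
  shows "set r = S \<and> distinct r \<and> (\<forall>j. rev_seqpav N Ap (set (take j r)) (take j r))"
  using assms
proof (induction rule: rev_seqpav.induct)
  case empty
  then show ?case by (simp add: rev_seqpav.empty)
next
  case (step a S r)
  have R: "rev_seqpav N Ap S (r @ [a])" using step.hyps by (intro rev_seqpav.step) auto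
  have "set (r @ [a]) = S" using step by auto
  moreover have "distinct (r @ [a])" using step by auto
  moreover have "\<forall>j. rev_seqpav N Ap (set (take j (r @ [a]))) (take j (r @ [a]))"
  proof
    fix j
    show "rev_seqpav N Ap (set (take j (r @ [a]))) (take j (r @ [a]))"
    proof (cases "j \<le> length r")
      case True
      then show ?thesis using step.IH by simp
    next
      case False
      then have "take j (r @ [a]) = r @ [a]" by simp
      then show ?thesis using R \<open>set (r @ [a]) = S\<close> by simp
    qed
  qed
  ultimately show ?case by blast
qed

lemma rev_inv:
  assumes "rev_seqpav N Ap S (xs @ [a])"
  shows "a \<in> S \<and> (\<forall>b\<in>S. w_pav N Ap S - w_pav N Ap (S - {a}) \<le> w_pav N Ap S - w_pav N Ap (S - {b}))"
  using assms by (cases rule: rev_seqpav.cases) auto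

lemma rev_finite:
  assumes "rev_seqpav N Ap S r" shows "finite S"
  using rev_props[OF assms] by (metis finite_set)

lemma marginal:
  assumes "finite S" "b \<in> S"
  shows "w_pav N Ap S - w_pav N Ap (S - {b}) =
     (\<Sum>i\<in>N. if b \<in> Ap i then 1 / real (card (Ap i \<inter> S)) else 0)"
proof -
  have "w_pav N Ap S - w_pav N Ap (S - {b}) =
     (\<Sum>i\<in>N. (\<Sum>j=1..card (Ap i \<inter> S). 1 / real j) - (\<Sum>j=1..card (Ap i \<inter> (S - {b})). 1 / real j))"
    unfolding w_pav_def by (simp add: sum_subtractf)
  also have "\<dots> = (\<Sum>i\<in>N. if b \<in> Ap i then 1 / real (card (Ap i \<inter> S)) else 0)"
  proof (rule sum.cong)
    fix i assume "i \<in> N"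
    show "(\<Sum>j=1..card (Ap i \<inter> S). 1 / real j) - (\<Sum>j=1..card (Ap i \<inter> (S - {b})). 1 / real j)
       = (if b \<in> Ap i then 1 / real (card (Ap i \<inter> S)) else 0)"
    proof (cases "b \<in> Ap i")
      case True
      have e: "Ap i \<inter> S = insert b (Ap i \<inter> (S - {b}))" using True assms by auto
      have f: "finite (Ap i \<inter> (S - {b}))" using assms by auto
      have c: "card (Ap i \<inter> S) = Suc (card (Ap i \<inter> (S - {b})))"
        unfolding e using f by simp
      show ?thesis unfolding c using True by (simp add: sum.cl_ivl_Suc)
    next
      case False
      then have "Ap i \<inter> (S - {b}) = Ap i \<inter> S" by auto
      then show ?thesis using False by simp
    qed
  qed simp
  finally show ?thesis .
qed

lemma sum_marginals:
  assumes "finite S" "finite N"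
  shows "(\<Sum>b\<in>S. (\<Sum>i\<in>N. if b \<in> Ap i then 1 / real (card (Ap i \<inter> S)) else 0)) \<le> real (card N)"
proof -
  have "(\<Sum>b\<in>S. (\<Sum>i\<in>N. if b \<in> Ap i then 1 / real (card (Ap i \<inter> S)) else 0))
     = (\<Sum>i\<in>N. (\<Sum>b\<in>S. if b \<in> Ap i then 1 / real (card (Ap i \<inter> S)) else 0))"
    by (rule sum.swap)
  also have "\<dots> = (\<Sum>i\<in>N. real (card (S \<inter> Ap i)) * (1 / real (card (Ap i \<inter> S))))"
    using assms(1) by (simp add: sum.inter_restrict[symmetric])
  also have "\<dots> \<le> (\<Sum>i\<in>N. 1)"
  proof (rule sum_mono)
    fix i
    show "real (card (S \<inter> Ap i)) * (1 / real (card (Ap i \<inter> S))) \<le> 1"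
      by (cases "card (Ap i \<inter> S) = 0") (auto simp: Int_commute)
  qed
  finally show ?thesis by simp
qed

lemma am_hm:
  fixes x :: "'a \<Rightarrow> real"
  assumes "finite I" "I \<noteq> {}" "\<And>i. i \<in> I \<Longrightarrow> x i > 0"
  shows "real (card I) ^ 2 \<le> (\<Sum>i\<in>I. 1 / x i) * (\<Sum>i\<in>I. x i)"
proof -
  define T where "T = (\<Sum>i\<in>I. x i)"
  define c where "c = real (card I)"
  have T: "T > 0" unfolding T_def using assms by (intro sum_pos) auto
  have c: "c > 0" unfolding c_def using assms by (simp add: card_gt_0_iff)
  define M where "M = T / c"
  have M: "M > 0" unfolding M_def using T c by simp
  have pt: "1 / x i \<ge> 2 / M - x i / M^2" if "i \<in> I" for i
  proof -
    have xi: "x i > 0" using assms(3) that by simp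
    have "(x i - M)^2 \<ge> 0" by simp
    then have "x i ^ 2 - 2 * M * x i + M^2 \<ge> 0" by (simp add: power2_diff algebra_simps)
    then have "(x i ^ 2 - 2 * M * x i + M^2) / (x i * M^2) \<ge> 0" using xi M by simp
    moreover have "(x i ^ 2 - 2 * M * x i + M^2) / (x i * M^2) = x i / M^2 - 2 / M + 1 / x i"
      using xi M by (simp add: field_simps power2_eq_square)
    ultimately show ?thesis by simp
  qed
  have "(\<Sum>i\<in>I. 1 / x i) \<ge> (\<Sum>i\<in>I. 2 / M - x i / M^2)"
    using pt by (intro sum_mono) auto
  also have "(\<Sum>i\<in>I. 2 / M - x i / M^2) = c * (2 / M) - T / M^2"
    unfolding T_def c_def by (simp add: sum_subtractf sum_divide_distrib)
  also have "c * (2 / M) - T / M^2 = c^2 / T"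
    unfolding M_def using c T by (simp add: field_simps power2_eq_square)
  finally have "c^2 / T \<le> (\<Sum>i\<in>I. 1 / x i)" .
  then have "c^2 \<le> (\<Sum>i\<in>I. 1 / x i) * T" using T by (simp add: divide_le_eq)
  then show ?thesis unfolding c_def T_def .
qed


lemma key:
  assumes "finite N" "N' \<subseteq> N" "N' \<noteq> {}" "finite S" "a \<in> S"
    and aN: "\<And>i. i \<in> N' \<Longrightarrow> a \<in> Ap i"
    and minl: "\<forall>b\<in>S. w_pav N Ap S - w_pav N Ap (S - {a}) \<le> w_pav N Ap S - w_pav N Ap (S - {b})"
  shows "real (card S) * real (card N') \<le> real (card N) * avg Ap N' S"
proof -
  define D where "D b = (\<Sum>i\<in>N. if b \<in> Ap i then 1 / real (card (Ap i \<inter> S)) else 0)" for b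
  define x where "x i = real (card (Ap i \<inter> S))" for i
  have fN': "finite N'" using assms(1,2) finite_subset by blast
  have Dw: "D b = w_pav N Ap S - w_pav N Ap (S - {b})" if "b \<in> S" for b
    unfolding D_def using marginal[OF assms(4) that, of N Ap] by simp
  have Dm: "D a \<le> D b" if "b \<in> S" for b
    using minl that Dw[OF that] Dw[OF assms(5)] by simp
  have "real (card S) * D a \<le> (\<Sum>b\<in>S. D b)"
    by (rule sum_bounded_below) (rule Dm)
  also have "\<dots> \<le> real (card N)" unfolding D_def using sum_marginals[OF assms(4,1)] by simp
  finally have sD: "real (card S) * D a \<le> real (card N)" .
  have xpos: "x i \<ge> 1" if "i \<in> N'" for i
  proof -
    have "a \<in> Ap i \<inter> S" using aN[OF that] assms(5) by simp
    then have "card (Ap i \<inter> S) > 0" using assms(4) by (auto simp: card_gt_0_iff)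
    then show ?thesis unfolding x_def by simp
  qed
  have "(\<Sum>i\<in>N'. 1 / x i) = (\<Sum>i\<in>N'. if a \<in> Ap i then 1 / real (card (Ap i \<inter> S)) else 0)"
    using aN unfolding x_def by (intro sum.cong) auto
  also have "\<dots> \<le> D a" unfolding D_def
    by (rule sum_mono2[OF assms(1,2)]) auto
  finally have hD: "(\<Sum>i\<in>N'. 1 / x i) \<le> D a" .
  have amhm: "real (card N') ^ 2 \<le> (\<Sum>i\<in>N'. 1 / x i) * (\<Sum>i\<in>N'. x i)"
    using am_hm[OF fN' assms(3), of x] xpos by force
  have Tn: "(\<Sum>i\<in>N'. x i) \<ge> 0" using xpos by (intro sum_nonneg) (auto intro: order_trans[of 0 1])
  have "real (card N') ^ 2 \<le> D a * (\<Sum>i\<in>N'. x i)"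
    using amhm hD Tn by (meson mult_right_mono order_trans)
  then have "real (card S) * real (card N') ^ 2 \<le> real (card S) * D a * (\<Sum>i\<in>N'. x i)"
    by (simp add: mult_left_mono mult.assoc)
  also have "\<dots> \<le> real (card N) * (\<Sum>i\<in>N'. x i)"
    using sD Tn by (simp add: mult_right_mono)
  finally have ineq: "real (card S) * real (card N') ^ 2 \<le> real (card N) * (\<Sum>i\<in>N'. x i)" .
  have cpos: "real (card N') > 0" using fN' assms(3) by (simp add: card_gt_0_iff)
  have "avg Ap N' S = (\<Sum>i\<in>N'. x i) / real (card N')" unfolding avg_def x_def by simp
  then have "real (card N) * avg Ap N' S = real (card N) * (\<Sum>i\<in>N'. x i) / real (card N')" by simp
  moreover have "real (card S) * real (card N') \<le> real (card N) * (\<Sum>i\<in>N'. x i) / real (card N')"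
    using ineq cpos by (simp add: le_divide_eq power2_eq_square mult.assoc)
  ultimately show ?thesis by simp
qed

theorem theorem6:
  fixes N :: "'v set" and A :: "'b set" and Ap :: "'v \<Rightarrow> 'b set"
    and \<alpha> :: real and l :: nat and N' :: "'v set" and r :: "'b list"
  assumes "is_profile N A Ap" and "N \<noteq> {}"
    and "\<alpha> \<in> \<rat>" and "0 < \<alpha>" and "\<alpha> \<le> 1"
    and "significant N Ap \<alpha> l N'"
    and "rev_seqpav N Ap A r"
  shows "\<exists>y::real. y \<ge> real l \<and>
           avg Ap N' (set (take (min (card A) (nat \<lfloor>y / \<alpha>\<rfloor>)) r)) \<ge> y"
proof (cases "l = 0")
  case True
  show ?thesis
    by (rule exI[of _ 0]) (simp add: True avg_def sum_nonneg)
next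
  case False
  have fN: "finite N" and fA: "finite A" and ApA: "\<And>i. i \<in> N \<Longrightarrow> Ap i \<subseteq> A"
    using assms(1) unfolding is_profile_def by auto
  have N'N: "N' \<subseteq> N" and cN': "card N' = nat \<lceil>\<alpha> * real (card N)\<rceil>"
    and coh: "cohesiveness Ap N' \<ge> l"
    using assms(6) unfolding significant_def by auto
  have fN': "finite N'" using fN N'N finite_subset by blast
  have nN: "real (card N) > 0" using fN assms(2) by (simp add: card_gt_0_iff)
  have cN'ge: "real (card N') \<ge> \<alpha> * real (card N)"
  proof -
    have h1: "\<alpha> * real (card N) \<le> real_of_int \<lceil>\<alpha> * real (card N)\<rceil>" by (rule le_of_int_ceiling)
    have "\<alpha> * real (card N) \<ge> 0" using assms(4) by simp
    then have c0: "\<lceil>\<alpha> * real (card N)\<rceil> \<ge> 0" using h1 by linarith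
    have "real_of_int \<lceil>\<alpha> * real (card N)\<rceil> = real (card N')" using cN' c0 by simp
    then show ?thesis using h1 by simp
  qed
  have "\<alpha> * real (card N) > 0" using assms(4) nN by (rule mult_pos_pos)
  then have "real (card N') > 0" using cN'ge by linarith
  then have N'ne: "N' \<noteq> {}" by auto
  define C where "C = (\<Inter>i\<in>N'. Ap i)"
  have cC: "card C \<ge> l" using coh unfolding cohesiveness_def C_def by simp
  then have "card C > 0" using False by simp
  then have Cne: "C \<noteq> {}" and fC: "finite C" by (auto simp: card_gt_0_iff)
  obtain i0 where i0: "i0 \<in> N'" using N'ne by auto
  have CA: "C \<subseteq> A" using i0 ApA N'N unfolding C_def by blast
  have rp: "set r = A" "distinct r" "\<And>j. rev_seqpav N Ap (set (take j r)) (take j r)"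
    using rev_props[OF assms(7)] by auto
  have lenr: "length r = card A" using distinct_card[OF rp(2)] rp(1) by simp
  define s where "s = (LEAST j. C \<subseteq> set (take j r))"
  have ex: "C \<subseteq> set (take (length r) r)" using CA rp by simp
  have sle: "s \<le> length r" unfolding s_def using ex by (rule Least_le)
  have Cs: "C \<subseteq> set (take s r)" unfolding s_def using ex by (rule LeastI)
  have s0: "s > 0" using Cs Cne by (cases s) auto
  have nCs: "\<not> C \<subseteq> set (take (s - 1) r)"
    using not_less_Least[of "s - 1" "\<lambda>j. C \<subseteq> set (take j r)"] s0 unfolding s_def by simp
  define a where "a = r ! (s - 1)"
  have tk: "take s r = take (s - 1) r @ [a]" unfolding a_def
    using take_Suc_conv_app_nth[of "s - 1" r] s0 sle by simp
  have aC: "a \<in> C" using Cs nCs tk by auto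
  define S where "S = set (take s r)"
  have cS: "card S = s" unfolding S_def using rp(2) sle
    by (simp add: distinct_card min_def)
  have RS: "rev_seqpav N Ap S (take (s - 1) r @ [a])" using rp(3)[of s] tk unfolding S_def by simp
  have inv: "a \<in> S" "\<forall>b\<in>S. w_pav N Ap S - w_pav N Ap (S - {a}) \<le> w_pav N Ap S - w_pav N Ap (S - {b})"
    using rev_inv[OF RS] by auto
  show ?thesis
  proof (cases "real s * \<alpha> \<ge> real l")
    case True
    have k: "min (card A) (nat \<lfloor>real s * \<alpha> / \<alpha>\<rfloor>) = s" using assms(4) sle lenr by simp
    have K: "real (card S) * real (card N') \<le> real (card N) * avg Ap N' S"
      using key[OF fN N'N N'ne _ inv(1) _ inv(2)] aC unfolding C_def S_def by auto
    have "real s * \<alpha> * real (card N) \<le> real s * real (card N')"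
      using mult_left_mono[OF cN'ge, of "real s"] by (simp add: mult.assoc)
    also have "\<dots> \<le> real (card N) * avg Ap N' S" using K cS by simp
    finally have "real s * \<alpha> \<le> avg Ap N' S" using nN by (simp add: mult.commute)
    then show ?thesis using True k unfolding S_def by (intro exI[of _ "real s * \<alpha>"]) simp
  next
    case False
    define k where "k = min (card A) (nat \<lfloor>real l / \<alpha>\<rfloor>)"
    have "real s < real l / \<alpha>" using False assms(4) by (simp add: less_divide_eq)
    then have "s \<le> nat \<lfloor>real l / \<alpha>\<rfloor>" by (intro le_nat_floor) simp
    then have sk: "s \<le> k" unfolding k_def using sle lenr by simp
    define T where "T = set (take k r)"
    have "set (take s r) \<subseteq> set (take k r)" by (rule set_take_subset_set_take[OF sk])
    then have CT: "C \<subseteq> T" using Cs unfolding T_def by (rule subset_trans[rotated])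
    have fT: "finite T" unfolding T_def by simp
    have each: "real l \<le> real (card (Ap i \<inter> T))" if "i \<in> N'" for i
    proof -
      have "C \<subseteq> Ap i \<inter> T" using CT that unfolding C_def by blast
      then have "card C \<le> card (Ap i \<inter> T)" using fT by (intro card_mono) auto
      then show ?thesis using cC by simp
    qed
    have "real (card N') * real l \<le> (\<Sum>i\<in>N'. real (card (Ap i \<inter> T)))"
      by (rule sum_bounded_below) (rule each)
    then have "real l \<le> avg Ap N' T" unfolding avg_def
      using \<open>real (card N') > 0\<close> by (simp add: le_divide_eq mult.commute)
    then show ?thesis unfolding T_def k_def by (intro exI[of _ "real l"]) simp
  qed
qed

end
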